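(* Let $\nu$ be a Krull valuation on $\mathbb{K}[x]$ and $Q$ a key polynomial for $\nu$ with $n=\deg Q$. Let $f=f_0+f_1Q+\dots+f_sQ^s$ where each $f_i\in\mathbb{K}[x]$ is either $0$ or a product of polynomials of degree smaller than $n$. Then $\nu_Q(f)=\min_{0\le i\le s}\{\nu(f_iQ^i)\}$.
   Context: Truncation: every $g\in\mathbb{K}[x]$ has a unique $Q$-expansion $g=g_0+g_1Q+\dots+g_tQ^t$ with $\deg g_i<\deg Q$; $\nu_Q(g)=\min_i\nu(g_iQ^i)$. Key polynomials: for nonzero $g$, with Hasse derivatives $\partial_bg=\sum_{i\ge b}\binom{i}{b}a_ix^{i-b}$ for $g=\sum a_ix^i$, $\epsilon(g)=\max_{1\le b\le\deg g}(\nu(g)-\nu(\partial_bg))/b$ if $\deg g>0$ and $\epsilon(g)=-\infty$ if $g$ is constant; a monic $Q$ is a key polynomial for $\nu$ if $\epsilon(g)\ge\epsilon(Q)$ implies $\deg g\ge\deg Q$ for all $g$. (For a key polynomial $Q$, $\nu_Q$ is a valuation.) *)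

theory Defs
  imports "HOL-Computational_Algebra.Polynomial" "HOL-Library.Extended"
begin

(* Values of a Krull valuation: Gamma \<union> {\<infinity>}, Gamma an ordered abelian group;
   we use 'g extended, where Pinf plays the role of \<infinity> (Minf is never taken). *)

definition krull_valuation :: "('a::field poly \<Rightarrow> 'g::linordered_ab_group_add extended) \<Rightarrow> bool" where
  "krull_valuation \<nu> \<longleftrightarrow>
     \<nu> 0 = Pinf \<and> \<nu> 1 = Fin 0 \<and>
     (\<forall>f. \<nu> f \<noteq> Minf) \<and>
     (\<forall>f. f \<noteq> 0 \<longrightarrow> \<nu> f \<noteq> Pinf) \<and>
     (\<forall>f g. \<nu> (f * g) = \<nu> f + \<nu> g) \<and>
     (\<forall>f g. min (\<nu> f) (\<nu> g) \<le> \<nu> (f + g))"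

fun nmul :: "nat \<Rightarrow> 'g::ab_group_add \<Rightarrow> 'g" where
  "nmul 0 x = 0"
| "nmul (Suc n) x = x + nmul n x"

definition hasse :: "nat \<Rightarrow> 'a::comm_ring_1 poly \<Rightarrow> 'a poly" where
  "hasse b g = (\<Sum>i\<in>{b..degree g}. monom (of_nat (i choose b) * coeff g i) (i - b))"

(* eps_ge \<nu> g h  means  \<epsilon>(g) \<ge> \<epsilon>(h), where
   \<epsilon>(g) = max_{1\<le>b\<le>deg g} (\<nu> g - \<nu>(\<partial>_b g))/b  (deg g > 0), \<epsilon>(g) = -\<infinity> (g constant).
   Terms with \<partial>_b g = 0 equal -\<infinity> and do not contribute to the max.
   The quotients live in the divisible hull of Gamma; (x/b \<ge> u/c) is expressed as c\<cdot>x \<ge> b\<cdot>u. *)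
definition eps_ge :: "('a::field poly \<Rightarrow> 'g::linordered_ab_group_add extended) \<Rightarrow> 'a poly \<Rightarrow> 'a poly \<Rightarrow> bool" where
  "eps_ge \<nu> g h \<longleftrightarrow>
     degree h = 0 \<or>
     (degree g > 0 \<and>
      (\<exists>b\<in>{1..degree g}. \<exists>x y. \<nu> g = Fin x \<and> \<nu> (hasse b g) = Fin y \<and>
         (\<forall>c\<in>{1..degree h}. \<forall>u w. \<nu> h = Fin u \<and> \<nu> (hasse c h) = Fin w \<longrightarrow>
              nmul b (u - w) \<le> nmul c (x - y))))"

definition key_poly :: "('a::field poly \<Rightarrow> 'g::linordered_ab_group_add extended) \<Rightarrow> 'a poly \<Rightarrow> bool" where
  "key_poly \<nu> Q \<longleftrightarrow> lead_coeff Q = 1 \<and>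
     (\<forall>g. g \<noteq> 0 \<longrightarrow> eps_ge \<nu> g Q \<longrightarrow> degree Q \<le> degree g)"

definition qexp :: "'a::field poly \<Rightarrow> 'a poly \<Rightarrow> nat \<Rightarrow> 'a poly" where
  "qexp Q g = (THE c. (\<forall>i. degree (c i) < degree Q) \<and> finite {i. c i \<noteq> 0} \<and>
                      g = (\<Sum>i\<in>{i. c i \<noteq> 0}. c i * Q ^ i))"

definition truncation :: "('a::field poly \<Rightarrow> 'g::linordered_ab_group_add extended) \<Rightarrow> 'a poly \<Rightarrow> 'a poly \<Rightarrow> 'g extended" where
  "truncation \<nu> Q g = (if g = 0 then Pinf
      else Min ((\<lambda>i. \<nu> (qexp Q g i * Q ^ i)) ` {i. qexp Q g i \<noteq> 0}))"

end

theory Submission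
  imports Defs
begin


lemma nmul_add: "nmul k (x + y) = nmul k x + nmul k (y::'g::ab_group_add)"
  by (induction k) (simp_all add: algebra_simps)
lemma nmul_uminus: "nmul k (- x) = - nmul k (x::'g::ab_group_add)"
  by (induction k) (simp_all add: algebra_simps)
lemma nmul_diff: "nmul k (x - y) = nmul k x - nmul k (y::'g::ab_group_add)"
  using nmul_add[of k x "-y"] nmul_uminus[of k y] by simp
lemma nmul_zero[simp]: "nmul k (0::'g::ab_group_add) = 0"
  by (induction k) simp_all
lemma nmul_plus: "nmul (a + b) (x::'g::ab_group_add) = nmul a x + nmul b x"
  by (induction a) (simp_all add: algebra_simps)
lemma nmul_mult: "nmul (a * b) (x::'g::ab_group_add) = nmul a (nmul b x)"
  by (induction a) (simp_all add: nmul_plus nmul_add)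
lemma nmul_mono: "x \<le> y \<Longrightarrow> nmul k x \<le> nmul k (y::'g::ordered_ab_group_add)"
  by (induction k) (simp_all add: add_mono)
lemma nmul_strict: "x < y \<Longrightarrow> k > 0 \<Longrightarrow> nmul k x < nmul k (y::'g::ordered_ab_group_add)"
proof (induction k)
  case 0 then show ?case by simp
next
  case (Suc k) then show ?case
    by (cases k) (auto intro: add_less_le_mono nmul_mono)
qed
lemma nmul_le_iff: "k > 0 \<Longrightarrow> nmul k x \<le> nmul k (y::'g::linordered_ab_group_add) \<longleftrightarrow> x \<le> y"
  by (meson nmul_mono nmul_strict not_le)
lemma nmul_less_iff: "k > 0 \<Longrightarrow> nmul k x < nmul k (y::'g::linordered_ab_group_add) \<longleftrightarrow> x < y"
  by (meson nmul_mono nmul_strict not_le)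
lemma nmul_one[simp]: "nmul 1 x = x" by simp

fun emul :: "nat \<Rightarrow> 'g::ab_group_add extended \<Rightarrow> 'g extended" where
  "emul k (Fin x) = Fin (nmul k x)"
| "emul k Pinf = Pinf"
| "emul k Minf = Minf"

lemma emul_add: "emul k (a + b) = emul k a + emul k b"
  by (cases a; cases b) (simp_all add: nmul_add)
lemma emul_le_iff: "k > 0 \<Longrightarrow> emul k a \<le> emul k b \<longleftrightarrow> a \<le> (b::'g::linordered_ab_group_add extended)"
  by (cases a; cases b) (simp_all add: nmul_le_iff)
lemma emul_min: "k > 0 \<Longrightarrow> emul k (min a b) = min (emul k a) (emul k (b::'g::linordered_ab_group_add extended))"
  by (metis emul_le_iff min_def)

lemma kv_emul:
  assumes "krull_valuation \<nu>" "k > 0"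
  shows "krull_valuation (\<lambda>h. emul k (\<nu> h))"
proof -
  have e: "emul k a = Minf \<longleftrightarrow> a = Minf" "emul k a = Pinf \<longleftrightarrow> a = Pinf" for a :: "'b::linordered_ab_group_add extended"
    by (cases a; simp)+
  show ?thesis using assms unfolding krull_valuation_def
    by (auto simp: e emul_add emul_min[symmetric] emul_le_iff zero_extended_def)
qed



context
  fixes \<nu> :: "'a::field poly \<Rightarrow> 'g::linordered_ab_group_add extended"
  assumes kv: "krull_valuation \<nu>"
begin

lemma kv_mult: "\<nu> (f * g) = \<nu> f + \<nu> g" using kv unfolding krull_valuation_def by blast
lemma kv_add: "min (\<nu> f) (\<nu> g) \<le> \<nu> (f + g)" using kv unfolding krull_valuation_def by blast
lemma kv_zero[simp]: "\<nu> 0 = Pinf" using kv unfolding krull_valuation_def by blast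
lemma kv_one: "\<nu> 1 = Fin 0" using kv unfolding krull_valuation_def by blast
lemma kv_Pinf_iff: "\<nu> f = Pinf \<longleftrightarrow> f = 0" using kv unfolding krull_valuation_def by force
lemma kv_fin: "f \<noteq> 0 \<Longrightarrow> \<exists>x. \<nu> f = Fin x"
  using kv unfolding krull_valuation_def by (cases "\<nu> f") auto
lemma kv_notMinf: "\<nu> f \<noteq> Minf" using kv unfolding krull_valuation_def by blast

lemma kv_uminus: "\<nu> (- f) = \<nu> f"
proof -
  have "\<nu> (-1) + \<nu> (-1) = Fin 0" using kv_mult[of "-1" "-1"] kv_one by simp
  moreover obtain x where x: "\<nu> (-1) = Fin x" using kv_fin[of "-1"] by auto
  ultimately have "x + x = 0" by simp
  hence "x = 0" by (metis add_neg_neg add_pos_pos linorder_neqE less_irrefl)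
  hence "\<nu> (-1) = Fin 0" using x by simp
  moreover have "Fin 0 + a = a" for a :: "'g extended" by (cases a) auto
  ultimately show ?thesis using kv_mult[of "-1" f] by simp
qed

lemma kv_diff: "min (\<nu> f) (\<nu> g) \<le> \<nu> (f - g)"
  using kv_add[of f "-g"] kv_uminus[of g] by simp

lemma kv_strict: assumes "\<nu> f < \<nu> g" shows "\<nu> (f + g) = \<nu> f"
proof -
  have "\<nu> f \<le> \<nu> (f + g)" using kv_add[of f g] assms by simp
  moreover have "min (\<nu> (f + g)) (\<nu> g) \<le> \<nu> f" using kv_diff[of "f + g" g] by simp
  ultimately show ?thesis using assms by (auto simp: min_def split: if_splits)
qed

lemma kv_sum_ge: "(\<And>i. i \<in> S \<Longrightarrow> T \<le> \<nu> (a i)) \<Longrightarrow> T \<le> \<nu> (sum a S)"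
proof (induction S rule: infinite_finite_induct)
  case (insert x F)
  have "T \<le> min (\<nu> (a x)) (\<nu> (sum a F))" using insert by simp
  from order_trans[OF this kv_add[of "a x" "sum a F"]] show ?case using insert(1,2) by simp
qed simp_all

lemma kv_sum_gt: "T \<noteq> Pinf \<Longrightarrow> (\<And>i. i \<in> S \<Longrightarrow> T < \<nu> (a i)) \<Longrightarrow> T < \<nu> (sum a S)"
proof (induction S rule: infinite_finite_induct)
  case (infinite A) then show ?case by (cases T) auto
next
  case empty then show ?case by (cases T) auto
next
  case (insert x F)
  have "T < min (\<nu> (a x)) (\<nu> (sum a F))" using insert by simp
  from less_le_trans[OF this kv_add[of "a x" "sum a F"]] show ?case using insert(1,2) by simp
qed

end


lemma coeff_hasse: "coeff (hasse b g) k = of_nat ((k+b) choose b) * coeff g (k+b)"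
proof -
  have "coeff (hasse b g) k = (\<Sum>i\<in>{b..degree g}. if i - b = k then of_nat (i choose b) * coeff g i else 0)"
    unfolding hasse_def coeff_sum coeff_monom by (rule sum.cong) auto
  also have "\<dots> = (\<Sum>i\<in>{b..degree g}. if i = k + b then of_nat (i choose b) * coeff g i else 0)"
    by (rule sum.cong) auto
  also have "\<dots> = of_nat ((k+b) choose b) * coeff g (k+b)"
    by (auto simp: coeff_eq_0)
  finally show ?thesis .
qed

lemma hasse_0[simp]: "hasse 0 g = g"
  by (rule poly_eqI) (simp add: coeff_hasse)
lemma hasse_add: "hasse b (f + g) = hasse b f + hasse b g"
  by (rule poly_eqI) (simp add: coeff_hasse algebra_simps)
lemma hasse_diff: "hasse b (f - g) = hasse b f - hasse b g"
  by (rule poly_eqI) (simp add: coeff_hasse algebra_simps)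
lemma hasse_high: "degree g < b \<Longrightarrow> hasse b g = 0"
  by (rule poly_eqI) (simp add: coeff_hasse coeff_eq_0)
lemma hasse_deg: "lead_coeff Q = 1 \<Longrightarrow> hasse (degree Q) Q = 1"
  by (rule poly_eqI) (auto simp: coeff_hasse coeff_eq_0 coeff_1)

lemma hasse_mult: "hasse b (f * g) = (\<Sum>j\<le>b. hasse j f * hasse (b - j) g)"
proof (rule poly_eqI)
  fix k
  define N where "N = k + b"
  have "coeff (hasse b (f * g)) k = of_nat (N choose b) * (\<Sum>u\<le>N. coeff f u * coeff g (N - u))"
    by (simp add: coeff_hasse coeff_mult N_def)
  also have "\<dots> = (\<Sum>u\<le>N. of_nat (N choose b) * (coeff f u * coeff g (N - u)))"
    by (simp add: sum_distrib_left)
  also have "\<dots> = (\<Sum>u\<le>N. \<Sum>j\<le>b. of_nat ((u choose j) * ((N - u) choose (b - j))) * (coeff f u * coeff g (N - u)))"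
  proof (rule sum.cong[OF refl])
    fix u assume "u \<in> {..N}"
    hence "N choose b = (\<Sum>j\<le>b. (u choose j) * ((N - u) choose (b - j)))"
      using vandermonde[of u "N - u" b] by simp
    thus "of_nat (N choose b) * (coeff f u * coeff g (N - u)) =
      (\<Sum>j\<le>b. of_nat ((u choose j) * ((N - u) choose (b - j))) * (coeff f u * coeff g (N - u)))"
      by (simp add: sum_distrib_right of_nat_sum)
  qed
  also have "\<dots> = (\<Sum>j\<le>b. \<Sum>u\<le>N. of_nat ((u choose j) * ((N - u) choose (b - j))) * (coeff f u * coeff g (N - u)))"
    by (rule sum.swap)
  also have "\<dots> = (\<Sum>j\<le>b. coeff (hasse j f * hasse (b - j) g) k)"
  proof (rule sum.cong[OF refl])
    fix j assume j: "j \<in> {..b}"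
    let ?F = "\<lambda>u. of_nat ((u choose j) * ((N - u) choose (b - j))) * (coeff f u * coeff g (N - u))"
    have "coeff (hasse j f * hasse (b - j) g) k = (\<Sum>s\<le>k. ?F (s + j))"
      unfolding coeff_mult
    proof (rule sum.cong[OF refl])
      fix s assume "s \<in> {..k}"
      hence "N - (s + j) = k - s + (b - j)" using j by (auto simp: N_def)
      thus "coeff (hasse j f) s * coeff (hasse (b - j) g) (k - s) = ?F (s + j)"
        by (simp add: coeff_hasse algebra_simps)
    qed
    also have "\<dots> = (\<Sum>u\<in>{j..k+j}. ?F u)"
    proof -
      have "(\<Sum>s\<le>k. ?F (s + j)) = (\<Sum>u\<in>(\<lambda>s. s + j) ` {..k}. ?F u)"
        by (simp add: sum.reindex inj_on_def)
      also have "(\<lambda>s. s + j) ` {..k} = {j..k+j}"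
        proof (auto simp: image_iff)
        fix x assume "j \<le> x" "x \<le> k + j"
        thus "\<exists>s\<in>{..k}. x = s + j" by (intro bexI[of _ "x - j"]) auto
      qed
      finally show ?thesis .
    qed
    also have "\<dots> = (\<Sum>u\<le>N. ?F u)"
    proof (rule sum.mono_neutral_left)
      show "{j..k+j} \<subseteq> {..N}" using j by (auto simp: N_def)
      show "\<forall>u\<in>{..N} - {j..k+j}. ?F u = 0"
      proof
        fix u assume u: "u \<in> {..N} - {j..k+j}"
        show "?F u = 0"
        proof (cases "u < j")
          case True then show ?thesis by (simp add: binomial_eq_0)
        next
          case False
          with u have "N - u < b - j" using j by (auto simp: N_def)
          then show ?thesis by (simp add: binomial_eq_0)
        qed
      qed
    qed simp
    finally show "(\<Sum>u\<le>N. ?F u) = coeff (hasse j f * hasse (b - j) g) k" by simp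
  qed
  also have "\<dots> = coeff (\<Sum>j\<le>b. hasse j f * hasse (b - j) g) k"
    by (simp add: coeff_sum)
  finally show "coeff (hasse b (f * g)) k = coeff (\<Sum>j\<le>b. hasse j f * hasse (b - j) g) k" .
qed



lemma ext_le_lt: "Fin p \<le> X \<Longrightarrow> Fin q < Y \<Longrightarrow> Fin (p + q) < X + (Y::'g::linordered_ab_group_add extended)"
  by (cases X; cases Y) (auto intro: add_le_less_mono)
lemma ext_lt_le: "Fin p < X \<Longrightarrow> Fin q \<le> Y \<Longrightarrow> Fin (p + q) < X + (Y::'g::linordered_ab_group_add extended)"
  by (cases X; cases Y) (auto intro: add_less_le_mono)

locale kp =
  fixes \<nu> :: "'a::field poly \<Rightarrow> 'g::linordered_ab_group_add extended" and Q :: "'a poly"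
  assumes kv: "krull_valuation \<nu>" and key: "key_poly \<nu> Q" and degQ: "degree Q > 0"
begin

abbreviation "n \<equiv> degree Q"

lemma Q_nz: "Q \<noteq> 0" using degQ by auto
lemma monic: "lead_coeff Q = 1" using key unfolding key_poly_def by auto

definition vl :: "'a poly \<Rightarrow> 'g" where "vl h = (case \<nu> h of Fin x \<Rightarrow> x | _ \<Rightarrow> 0)"
lemma vl: "h \<noteq> 0 \<Longrightarrow> \<nu> h = Fin (vl h)"
  using kv_fin[OF kv, of h] by (auto simp: vl_def)

definition P :: nat where "P = fact n"
lemma P_pos: "P > 0" by (simp add: P_def)
lemma P_dvd: "1 \<le> c \<Longrightarrow> c \<le> n \<Longrightarrow> c * (P div c) = P"
  unfolding P_def using dvd_fact[of c n] by simp

definition C where "C = {c\<in>{1..n}. hasse c Q \<noteq> 0}"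
definition e where "e c = nmul (P div c) (vl Q - vl (hasse c Q))"
definition E where "E = Max (e ` C)"

lemma C_fin: "finite C" by (simp add: C_def)
lemma C_ne: "n \<in> C" using degQ hasse_deg[OF monic] by (simp add: C_def)
lemma e_le_E: "c \<in> C \<Longrightarrow> e c \<le> E" unfolding E_def using C_fin by auto

definition b0 where "b0 = (SOME c. c \<in> C \<and> e c = E)"
lemma b0: "b0 \<in> C" "e b0 = E"
proof -
  have "E \<in> e ` C" unfolding E_def using C_fin C_ne by (intro Max_in) auto
  then have "\<exists>c. c \<in> C \<and> e c = E" by auto
  then show "b0 \<in> C" "e b0 = E" unfolding b0_def by (metis (mono_tags, lifting) someI_ex)+
qed

definition \<mu> where "\<mu> h = emul P (\<nu> h)"
lemma kvm: "krull_valuation \<mu>" unfolding \<mu>_def by (rule kv_emul[OF kv P_pos])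
definition m where "m h = nmul P (vl h)"
lemma mu: "h \<noteq> 0 \<Longrightarrow> \<mu> h = Fin (m h)" by (simp add: \<mu>_def m_def vl)
lemma mu_less_iff: "\<mu> a < \<mu> b \<longleftrightarrow> \<nu> a < \<nu> b"
  unfolding \<mu>_def using emul_le_iff[OF P_pos] by (meson not_le)
lemma mu_eq_iff: "\<mu> a = \<mu> b \<longleftrightarrow> \<nu> a = \<nu> b"
  unfolding \<mu>_def by (metis emul_le_iff[OF P_pos] order_antisym order_refl)

lemma QA: "Fin (m Q - nmul j E) \<le> \<mu> (hasse j Q)"
proof (cases "j = 0")
  case True then show ?thesis using mu[OF Q_nz] by simp
next
  case j: False
  show ?thesis
  proof (cases "hasse j Q = 0")
    case True then show ?thesis by (simp add: \<mu>_def kv_zero[OF kv])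
  next
    case False
    then have "j \<le> n" using hasse_high[of Q j] by fastforce
    with j False have jC: "j \<in> C" by (simp add: C_def)
    have "nmul P (vl Q - vl (hasse j Q)) = nmul j (e j)"
      unfolding e_def using P_dvd[of j] \<open>j \<le> n\<close> j by (simp add: nmul_mult[symmetric])
    also have "\<dots> \<le> nmul j E" by (rule nmul_mono[OF e_le_E[OF jC]])
    finally have "m Q - nmul j E \<le> m (hasse j Q)" unfolding m_def by (simp add: nmul_diff diff_le_eq add.commute)
    then show ?thesis using mu[OF False] by simp
  qed
qed

lemma QB: "\<mu> (hasse b0 Q) = Fin (m Q - nmul b0 E)" "b0 \<ge> 1"
proof -
  have h: "hasse b0 Q \<noteq> 0" "1 \<le> b0" "b0 \<le> n" using b0(1) by (auto simp: C_def)
  have "nmul P (vl Q - vl (hasse b0 Q)) = nmul b0 E"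
    unfolding b0(2)[symmetric] e_def using P_dvd[of b0] h by (simp add: nmul_mult[symmetric])
  then have "m (hasse b0 Q) = m Q - nmul b0 E" unfolding m_def by (simp add: nmul_diff algebra_simps)
  then show "\<mu> (hasse b0 Q) = Fin (m Q - nmul b0 E)" using mu[OF h(1)] by simp
  show "b0 \<ge> 1" using h by simp
qed

definition SBp where "SBp h \<longleftrightarrow> h \<noteq> 0 \<and> (\<forall>j\<ge>1. Fin (m h - nmul j E) < \<mu> (hasse j h))"

lemma SB_small: assumes "h \<noteq> 0" "degree h < n" shows "SBp h"
  unfolding SBp_def
proof (intro conjI allI impI assms)
  fix j :: nat assume j: "1 \<le> j"
  show "Fin (m h - nmul j E) < \<mu> (hasse j h)"
  proof (cases "hasse j h = 0")
    case True then show ?thesis by (simp add: \<mu>_def kv_zero[OF kv])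
  next
    case False
    then have jd: "j \<le> degree h" using hasse_high[of h j] by fastforce
    have "\<not> eps_ge \<nu> h Q"
      using key assms unfolding key_poly_def by (meson not_le)
    then have "\<not> (\<forall>c\<in>{1..n}. \<forall>u w. \<nu> Q = Fin u \<and> \<nu> (hasse c Q) = Fin w \<longrightarrow>
              nmul j (u - w) \<le> nmul c (vl h - vl (hasse j h)))"
      unfolding eps_ge_def using degQ j jd vl[OF assms(1)] vl[OF False] by auto
    then obtain c w where c0: "c \<in> {1..n}" "\<nu> (hasse c Q) = Fin w"
      "nmul c (vl h - vl (hasse j h)) < nmul j (vl Q - w)"
      using vl[OF Q_nz] by (auto simp: not_le)
    have hc: "hasse c Q \<noteq> 0" using c0(2) kv_zero[OF kv] by auto
    have c: "c \<in> {1..n}" "nmul c (vl h - vl (hasse j h)) < nmul j (vl Q - vl (hasse c Q))"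
      using c0 vl[OF hc] by auto
    have cC: "c \<in> C" using c hc by (auto simp: C_def)
    have Pc: "P div c > 0" using P_dvd[of c] c P_pos by (metis gr0I mult_0_right atLeastAtMost_iff)
    have "nmul P (vl h - vl (hasse j h)) = nmul (P div c) (nmul c (vl h - vl (hasse j h)))"
      using P_dvd[of c] c by (simp add: nmul_mult[symmetric] mult.commute)
    also have "\<dots> < nmul (P div c) (nmul j (vl Q - vl (hasse c Q)))"
      by (rule nmul_strict[OF c(2) Pc])
    also have "\<dots> = nmul j (e c)" unfolding e_def by (simp add: nmul_mult[symmetric] mult.commute)
    also have "\<dots> \<le> nmul j E" by (rule nmul_mono[OF e_le_E[OF cC]])
    finally have "m h - nmul j E < m (hasse j h)" unfolding m_def by (simp add: nmul_diff algebra_simps)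
    then show ?thesis using mu[OF False] by simp
  qed
qed

end


context kp begin

lemma SB_weak: "SBp h \<Longrightarrow> Fin (m h - nmul i E) \<le> \<mu> (hasse i h)"
  unfolding SBp_def by (cases "i = 0") (auto simp: mu less_imp_le)

lemma m_mult: "a \<noteq> 0 \<Longrightarrow> b \<noteq> 0 \<Longrightarrow> m (a * b) = m a + m b"
  using kv_mult[OF kvm, of a b] mu[of a] mu[of b] mu[of "a*b"] by simp

lemma SB_mult: assumes a: "SBp a" and b: "SBp b" shows "SBp (a * b)"
proof -
  have nz: "a \<noteq> 0" "b \<noteq> 0" "a * b \<noteq> 0" using a b by (auto simp: SBp_def)
  show ?thesis unfolding SBp_def
  proof (intro conjI allI impI nz)
    fix j :: nat assume j: "1 \<le> j"
    show "Fin (m (a * b) - nmul j E) < \<mu> (hasse j (a * b))"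
      unfolding hasse_mult
    proof (rule kv_sum_gt[OF kvm])
      fix i assume i: "i \<in> {..j}"
      have eq: "m (a * b) - nmul j E = (m a - nmul i E) + (m b - nmul (j - i) E)"
        using i m_mult[OF nz(1,2)] nmul_plus[of i "j - i" E] by (simp add: algebra_simps)
      have "Fin ((m a - nmul i E) + (m b - nmul (j - i) E)) < \<mu> (hasse i a) + \<mu> (hasse (j - i) b)"
      proof (cases "i = 0")
        case True
        then show ?thesis using j b SB_weak[OF a, of i] unfolding SBp_def by (intro ext_le_lt) auto
      next
        case False
        then show ?thesis using a SB_weak[OF b, of "j - i"] unfolding SBp_def by (intro ext_lt_le) auto
      qed
      then show "Fin (m (a * b) - nmul j E) < \<mu> (hasse i a * hasse (j - i) b)"
        using eq kv_mult[OF kvm] by simp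
    qed simp
  qed
qed

lemma key_lemma:
  assumes a: "a \<noteq> 0" "degree a < n" and b: "b \<noteq> 0" "degree b < n"
  defines "h \<equiv> a * b"
  shows "\<nu> (h mod Q) = \<nu> h \<and> \<nu> h < \<nu> ((h div Q) * Q) \<and> degree (h div Q) < n"
proof -
  define q r where "q = h div Q" and "r = h mod Q"
  have hqr: "h = q * Q + r" unfolding q_def r_def by simp
  have SBh: "SBp h" unfolding h_def by (intro SB_mult SB_small a b)
  have hnz: "h \<noteq> 0" using SBh SBp_def by auto
  have degh: "degree h < 2 * n" unfolding h_def using degree_mult_le[of a b] a b by simp
  have degr: "degree r < n" unfolding r_def using degree_mod_less[OF Q_nz, of h] degQ by auto
  have degq: "degree q < n"
  proof (cases "q = 0")
    case True then show ?thesis using degQ by simp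
  next
    case False
    have "degree (q * Q) = degree q + n" using False Q_nz by (simp add: degree_mult_eq)
    moreover have "degree (q * Q) \<le> max (degree h) (degree r)"
      using hqr degree_diff_le_max[of h r] by (metis add_diff_cancel_right')
    ultimately show ?thesis using degh degr by auto
  qed
  have main: "\<mu> r = \<mu> h \<and> \<mu> h < \<mu> (q * Q)"
  proof (cases "q = 0")
    case True
    have "\<mu> (q * Q) = Pinf" using True by (simp add: \<mu>_def kv_zero[OF kv])
    moreover have "r = h" using hqr True by simp
    ultimately show ?thesis using mu[OF hnz] by simp
  next
    case qnz: False
    have SBq: "SBp q" by (rule SB_small[OF qnz degq])
    define V where "V = m q + m Q - nmul b0 E"
    have "hasse b0 (q * Q) = (\<Sum>i\<le>b0. hasse i q * hasse (b0 - i) Q)" by (rule hasse_mult)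
    also have "\<dots> = q * hasse b0 Q + (\<Sum>i\<in>{1..b0}. hasse i q * hasse (b0 - i) Q)"
    proof -
      have "{..b0} = insert 0 {1..b0}" by auto
      then show ?thesis by simp
    qed
    finally have hd: "hasse b0 (q * Q) = q * hasse b0 Q + (\<Sum>i\<in>{1..b0}. hasse i q * hasse (b0 - i) Q)" .
    have t0: "\<mu> (q * hasse b0 Q) = Fin V"
      using kv_mult[OF kvm, of q "hasse b0 Q"] mu[OF qnz] QB(1) by (simp add: V_def algebra_simps)
    have trest: "Fin V < \<mu> (\<Sum>i\<in>{1..b0}. hasse i q * hasse (b0 - i) Q)"
    proof (rule kv_sum_gt[OF kvm])
      fix i assume i: "i \<in> {1..b0}"
      have eq: "V = (m q - nmul i E) + (m Q - nmul (b0 - i) E)"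
        using i nmul_plus[of i "b0 - i" E] by (simp add: V_def algebra_simps)
      have "Fin ((m q - nmul i E) + (m Q - nmul (b0 - i) E)) < \<mu> (hasse i q) + \<mu> (hasse (b0 - i) Q)"
        using SBq i QA[of "b0 - i"] unfolding SBp_def by (intro ext_lt_le) auto
      then show "Fin V < \<mu> (hasse i q * hasse (b0 - i) Q)" using eq kv_mult[OF kvm] by simp
    qed simp
    have vqQ: "\<mu> (hasse b0 (q * Q)) = Fin V"
      using hd kv_strict[OF kvm, of "q * hasse b0 Q"] t0 trest by simp
    define t where "t = (if r = 0 then m h else min (m h) (m r))"
    have dh: "Fin (t - nmul b0 E) < \<mu> (hasse b0 h)"
    proof -
      have "Fin (m h - nmul b0 E) < \<mu> (hasse b0 h)" using SBh QB(2) unfolding SBp_def by auto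
      moreover have "t \<le> m h" unfolding t_def by auto
      then have "Fin (t - nmul b0 E) \<le> Fin (m h - nmul b0 E)" by simp
      ultimately show ?thesis by (rule le_less_trans[rotated])
    qed
    have dr: "Fin (t - nmul b0 E) < \<mu> (hasse b0 r)"
    proof (cases "r = 0")
      case True then show ?thesis by (simp add: hasse_def \<mu>_def kv_zero[OF kv])
    next
      case False
      then have "Fin (m r - nmul b0 E) < \<mu> (hasse b0 r)" using SB_small[OF False degr] QB(2) unfolding SBp_def by auto
      moreover have "t \<le> m r" unfolding t_def using False by auto
      then have "Fin (t - nmul b0 E) \<le> Fin (m r - nmul b0 E)" by simp
      ultimately show ?thesis by (rule le_less_trans[rotated])
    qed
    have "hasse b0 (q * Q) = hasse b0 h - hasse b0 r" proof -
      have "q * Q = h - r" using hqr by simp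
      then show ?thesis by (simp add: hasse_diff)
    qed
    then have "min (\<mu> (hasse b0 h)) (\<mu> (hasse b0 r)) \<le> Fin V" using kv_diff[OF kvm, of "hasse b0 h" "hasse b0 r"] vqQ by simp
    then have "Fin (t - nmul b0 E) < Fin V" using dh dr
      by (metis less_le_trans min_le_iff_disj)
    then have tl: "t < m q + m Q" by (simp add: V_def)
    have qQ: "\<mu> (q * Q) = Fin (m q + m Q)" using kv_mult[OF kvm, of q Q] mu[OF qnz] mu[OF Q_nz] by simp
    show ?thesis
    proof (cases "r = 0")
      case True
      then have "h = q * Q" using hqr by simp
      then show ?thesis using tl qQ mu[OF hnz] unfolding t_def using True by simp
    next
      case rnz: False
      have mr: "\<mu> r = Fin (m r)" "\<mu> h = Fin (m h)" using mu rnz hnz by auto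
      show ?thesis
      proof (cases "m r \<le> m h")
        case True
        then have "t = m r" unfolding t_def using rnz by (simp add: min_def)
        then have lt: "\<mu> r < \<mu> (q * Q)" using tl qQ mr by simp
        have "\<mu> h = \<mu> r" using kv_strict[OF kvm lt] hqr by (simp add: add.commute)
        then show ?thesis using lt by simp
      next
        case False
        then have "t = m h" unfolding t_def using rnz by (auto simp: min_def)
        then have lt: "\<mu> h < \<mu> (q * Q)" using tl qQ mr by simp
        have "r = h + (- (q * Q))" using hqr by simp
        then have "\<mu> r = \<mu> h" using kv_strict[OF kvm, of h "- (q * Q)"] lt kv_uminus[OF kvm] by simp
        then show ?thesis using False mr by simp
      qed
    qed
  qed
  then show ?thesis using degq unfolding q_def r_def by (simp add: mu_eq_iff mu_less_iff)
qed

end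


context kp begin

definition isexpN where
  "isexpN c g N \<longleftrightarrow> (\<forall>i. degree (c i) < n) \<and> (\<forall>i>N. c i = 0) \<and> g = (\<Sum>i\<le>N. c i * Q ^ i)"

lemma isexpN_mono: assumes "isexpN c g N" "N \<le> N'" shows "isexpN c g N'"
proof -
  have "(\<Sum>i\<le>N. c i * Q ^ i) = (\<Sum>i\<le>N'. c i * Q ^ i)"
    using assms by (intro sum.mono_neutral_left) (auto simp: isexpN_def)
  then show ?thesis using assms by (auto simp: isexpN_def)
qed

lemma exp_unique:
  assumes "\<forall>i. degree (c i) < n" "\<forall>i. degree (d i) < n"
    "(\<Sum>i\<le>N. c i * Q ^ i) = (\<Sum>i\<le>N. d i * Q ^ i)"
  shows "\<forall>i\<le>N. c i = d i"
  using assms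
proof (induction N arbitrary: c d)
  case 0 then show ?case by simp
next
  case (Suc N)
  have split: "(\<Sum>i\<le>Suc N. x i * Q ^ i) = x 0 + Q * (\<Sum>i\<le>N. x (Suc i) * Q ^ i)" for x
    by (simp only: sum.atMost_Suc_shift) (simp add: sum_distrib_left mult.assoc mult.left_commute del: sum.atMost_Suc)
  let ?X = "\<Sum>i\<le>N. c (Suc i) * Q ^ i" and ?Y = "\<Sum>i\<le>N. d (Suc i) * Q ^ i"
  have eq: "c 0 + Q * ?X = d 0 + Q * ?Y" using Suc.prems(3) split by metis
  have "(c 0 + Q * ?X) mod Q = c 0" using Suc.prems(1) by (simp add: mod_poly_less)
  moreover have "(d 0 + Q * ?Y) mod Q = d 0" using Suc.prems(2) by (simp add: mod_poly_less)
  ultimately have 0: "c 0 = d 0" using eq by metis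
  then have "Q * ?X = Q * ?Y" using eq by simp
  then have "?X = ?Y" using Q_nz by simp
  then have "\<forall>i\<le>N. c (Suc i) = d (Suc i)" using Suc.IH[of "c \<circ> Suc" "d \<circ> Suc"] Suc.prems by simp
  then show ?case using 0 by (metis Suc_le_mono not0_implies_Suc)
qed

lemma qexp_eq: assumes "isexpN c g N" shows "qexp Q g = c"
  unfolding qexp_def
proof (rule the_equality)
  have fin: "finite {i. c i \<noteq> 0}" using assms unfolding isexpN_def
    by (metis (mono_tags) finite_atMost finite_subset mem_Collect_eq not_le subsetI atMost_iff)
  have "(\<Sum>i\<in>{i. c i \<noteq> 0}. c i * Q ^ i) = (\<Sum>i\<le>N. c i * Q ^ i)"
    using assms unfolding isexpN_def by (intro sum.mono_neutral_left) (auto simp: not_le[symmetric])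
  then show "(\<forall>i. degree (c i) < degree Q) \<and> finite {i. c i \<noteq> 0} \<and> g = (\<Sum>i\<in>{i. c i \<noteq> 0}. c i * Q ^ i)"
    using assms fin unfolding isexpN_def by auto
next
  fix d assume d: "(\<forall>i. degree (d i) < degree Q) \<and> finite {i. d i \<noteq> 0} \<and> g = (\<Sum>i\<in>{i. d i \<noteq> 0}. d i * Q ^ i)"
  obtain M where M: "\<forall>i>M. d i = 0"
    using d by (metis (mono_tags) finite_nat_set_iff_bounded_le mem_Collect_eq not_le)
  define K where "K = max N M"
  have "(\<Sum>i\<in>{i. d i \<noteq> 0}. d i * Q ^ i) = (\<Sum>i\<le>K. d i * Q ^ i)"
    using M unfolding K_def by (intro sum.mono_neutral_left) (auto, metis max.coboundedI2 not_le)
  then have dK: "isexpN d g K" using d M unfolding isexpN_def K_def by auto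
  have cK: "isexpN c g K" using isexpN_mono[OF assms] K_def by simp
  have dd: "\<forall>i. degree (d i) < n" "\<forall>i>K. d i = 0" "g = (\<Sum>i\<le>K. d i * Q ^ i)"
    using dK unfolding isexpN_def by blast+
  have cc: "\<forall>i. degree (c i) < n" "\<forall>i>K. c i = 0" "g = (\<Sum>i\<le>K. c i * Q ^ i)"
    using cK unfolding isexpN_def by blast+
  have "\<forall>i\<le>K. d i = c i" using exp_unique[OF dd(1) cc(1)] dd(3) cc(3) by metis
  then show "d = c"
  proof (intro ext)
    fix i assume "\<forall>i\<le>K. d i = c i"
    then show "d i = c i" using dd(2) cc(2) by (cases "i \<le> K") auto
  qed
qed

definition sh :: "(nat \<Rightarrow> 'a poly) \<Rightarrow> nat \<Rightarrow> 'a poly" where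
  "sh c k = (case k of 0 \<Rightarrow> 0 | Suc j \<Rightarrow> c j)"

lemma isexpN_sh: assumes "isexpN c g N" shows "isexpN (sh c) (Q * g) (Suc N)"
proof -
  have "(\<Sum>i\<le>Suc N. sh c i * Q ^ i) = Q * (\<Sum>i\<le>N. c i * Q ^ i)"
    by (simp only: sum.atMost_Suc_shift) (simp add: sh_def sum_distrib_left mult.assoc mult.left_commute del: sum.atMost_Suc)
  then show ?thesis using assms degQ unfolding isexpN_def sh_def by (auto split: nat.splits)
qed

definition shn :: "nat \<Rightarrow> (nat \<Rightarrow> 'a poly) \<Rightarrow> nat \<Rightarrow> 'a poly" where
  "shn i c k = (if k < i then 0 else c (k - i))"

lemma isexpN_shn: assumes "isexpN c g N" shows "isexpN (shn i c) (Q ^ i * g) (N + i)"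
proof (induction i)
  case 0 then show ?case using assms by (simp add: shn_def)
next
  case (Suc i)
  have "shn (Suc i) c = sh (shn i c)" by (auto simp: shn_def sh_def split: nat.splits)
  then show ?case using isexpN_sh[OF Suc.IH] by (simp add: algebra_simps)
qed

lemma deg_sum_lt: "(\<And>i. i \<in> S \<Longrightarrow> degree (g i) < n) \<Longrightarrow> degree (sum g S) < n"
proof (induction S rule: infinite_finite_induct)
  case (insert x F)
  have "degree (g x + sum g F) \<le> max (degree (g x)) (degree (sum g F))" by (rule degree_add_le_max)
  moreover have "degree (g x) < n" "degree (sum g F) < n" using insert by simp_all
  ultimately show ?case using insert(1,2) by simp
qed (use degQ in auto)

lemma isexpN_sum: assumes "\<And>i. i \<in> S \<Longrightarrow> isexpN (c i) (g i) N" "finite S"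
  shows "isexpN (\<lambda>k. \<Sum>i\<in>S. c i k) (\<Sum>i\<in>S. g i) N"
proof -
  have "(\<Sum>i\<in>S. g i) = (\<Sum>i\<in>S. \<Sum>k\<le>N. c i k * Q ^ k)"
    by (rule sum.cong[OF refl]) (use assms(1) in \<open>simp add: isexpN_def\<close>)
  also have "\<dots> = (\<Sum>k\<le>N. (\<Sum>i\<in>S. c i k) * Q ^ k)" by (subst sum.swap) (simp add: sum_distrib_right)
  finally have "(\<Sum>i\<in>S. g i) = (\<Sum>k\<le>N. (\<Sum>i\<in>S. c i k) * Q ^ k)" .
  moreover have "\<forall>k. degree (\<Sum>i\<in>S. c i k) < n" using assms(1) by (auto intro!: deg_sum_lt simp: isexpN_def)
  moreover have "\<forall>k>N. (\<Sum>i\<in>S. c i k) = 0" using assms(1) by (auto simp: isexpN_def)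
  ultimately show ?thesis unfolding isexpN_def by simp
qed

end


lemma ext_strict_l: "X < Y \<Longrightarrow> Fin a + X < Fin a + (Y::'g::linordered_ab_group_add extended)"
  by (cases X; cases Y) auto
lemma ext_strict_r: "X < Y \<Longrightarrow> X + Fin a < Y + (Fin a::'g::linordered_ab_group_add extended)"
  by (cases X; cases Y) auto

context kp begin

lemma isexpN_add: assumes "isexpN c g N" "isexpN d h N" shows "isexpN (\<lambda>k. c k + d k) (g + h) N"
proof -
  have "g + h = (\<Sum>k\<le>N. (c k + d k) * Q ^ k)"
    using assms unfolding isexpN_def by (simp add: sum.distrib algebra_simps)
  moreover have "degree (c k + d k) < n" for k
    using assms degree_add_le_max[of "c k" "d k"] unfolding isexpN_def by (metis le_less_trans max_less_iff_conj)
  ultimately show ?thesis using assms unfolding isexpN_def by auto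
qed

definition G where "G h \<longleftrightarrow> (\<exists>c N. isexpN c h N \<and> \<nu> (c 0) = \<nu> h \<and> (\<forall>j\<ge>1. \<nu> h < \<nu> (c j * Q ^ j)))"

lemma nu_fin: "x \<noteq> 0 \<Longrightarrow> \<nu> x = Fin (vl x)" by (rule vl)
lemma nu0: "\<nu> 0 = Pinf" by (rule kv_zero[OF kv])
lemma numult: "\<nu> (a * b) = \<nu> a + \<nu> b" by (rule kv_mult[OF kv])

lemma G_small: assumes "p \<noteq> 0" "degree p < n" shows "G p"
proof -
  let ?c = "\<lambda>k::nat. if k = 0 then p else 0"
  have "isexpN ?c p 0" using assms degQ unfolding isexpN_def by auto
  moreover have "\<nu> p < \<nu> (?c j * Q ^ j)" if "j \<ge> 1" for j
    using that nu_fin[OF assms(1)] nu0 by simp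
  ultimately show ?thesis unfolding G_def by (intro exI[of _ ?c] exI[of _ 0]) auto
qed

lemma G_step: assumes G: "G h" and hnz: "h \<noteq> 0" and p: "p \<noteq> 0" "degree p < n" shows "G (p * h)"
proof -
  obtain c N where c: "isexpN c h N" "\<nu> (c 0) = \<nu> h" "\<forall>j\<ge>1. \<nu> h < \<nu> (c j * Q ^ j)"
    using G unfolding G_def by blast
  have cdeg: "degree (c k) < n" for k using c(1) unfolding isexpN_def by auto
  have cz: "k > N \<Longrightarrow> c k = 0" for k using c(1) unfolding isexpN_def by auto
  have hsum: "h = (\<Sum>k\<le>N. c k * Q ^ k)" using c(1) unfolding isexpN_def by auto
  define qf where "qf k = (p * c k) div Q" for k
  define rf where "rf k = (p * c k) mod Q" for k
  have KL: "c k \<noteq> 0 \<Longrightarrow> \<nu> (rf k) = \<nu> (p * c k) \<and> \<nu> (p * c k) < \<nu> (qf k * Q) \<and> degree (qf k) < n" for k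
    unfolding qf_def rf_def using key_lemma[OF p, of "c k"] cdeg by auto
  have qdeg: "degree (qf k) < n" for k using KL[of k] degQ by (cases "c k = 0") (auto simp: qf_def)
  have rdeg: "degree (rf k) < n" for k using degree_mod_less[OF Q_nz, of "p * c k"] degQ by (auto simp: rf_def)
  have e1: "isexpN rf (\<Sum>k\<le>N. rf k * Q ^ k) (Suc N)"
    by (rule isexpN_mono[of _ _ N]) (use rdeg cz in \<open>auto simp: isexpN_def rf_def\<close>)
  have e2: "isexpN (sh qf) (Q * (\<Sum>k\<le>N. qf k * Q ^ k)) (Suc N)"
    by (rule isexpN_sh) (use qdeg cz in \<open>auto simp: isexpN_def qf_def\<close>)
  define d where "d k = rf k + sh qf k" for k
  have "p * h = (\<Sum>k\<le>N. (p * c k) * Q ^ k)" by (simp add: hsum sum_distrib_left mult.assoc)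
  also have "\<dots> = (\<Sum>k\<le>N. (qf k * Q + rf k) * Q ^ k)" by (simp add: qf_def rf_def)
  also have "\<dots> = (\<Sum>k\<le>N. rf k * Q ^ k) + Q * (\<Sum>k\<le>N. qf k * Q ^ k)"
    by (simp add: algebra_simps sum.distrib sum_distrib_left)
  finally have ph: "p * h = (\<Sum>k\<le>N. rf k * Q ^ k) + Q * (\<Sum>k\<le>N. qf k * Q ^ k)" .
  have ed: "isexpN d (p * h) (Suc N)" unfolding ph d_def by (rule isexpN_add[OF e1 e2])
  have c0: "c 0 \<noteq> 0" using c(2) hnz nu0 kv_Pinf_iff[OF kv] by metis
  have phnz: "p * h \<noteq> 0" using p hnz by simp
  have v0: "\<nu> (d 0) = \<nu> (p * h)"
    using KL[OF c0] c(2) by (simp add: d_def sh_def numult)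
  have vj: "\<nu> (p * h) < \<nu> (d j * Q ^ j)" if j: "j \<ge> 1" for j
  proof -
    have a: "\<nu> (p * h) < \<nu> (rf j * Q ^ j)"
    proof (cases "c j = 0")
      case True then show ?thesis using nu_fin[OF phnz] by (simp add: rf_def nu0)
    next
      case False
      have "\<nu> (rf j * Q ^ j) = \<nu> p + \<nu> (c j * Q ^ j)" using KL[OF False] by (simp add: numult add.assoc)
      moreover have "\<nu> p + \<nu> h < \<nu> p + \<nu> (c j * Q ^ j)"
        using ext_strict_l[OF c(3)[rule_format, OF j]] nu_fin[OF p(1)] by metis
      ultimately show ?thesis by (simp add: numult)
    qed
    obtain i where i: "j = Suc i" using j by (cases j) auto
    have b: "\<nu> (p * h) < \<nu> (sh qf j * Q ^ j)"
    proof (cases "c i = 0")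
      case True then show ?thesis using nu_fin[OF phnz] by (simp add: i sh_def qf_def nu0)
    next
      case False
      have Qi: "Q ^ i \<noteq> 0" using Q_nz by simp
      have "\<nu> (sh qf j * Q ^ j) = \<nu> (qf i * Q) + \<nu> (Q ^ i)" by (simp add: i sh_def numult algebra_simps)
      moreover have "\<nu> (p * c i) + \<nu> (Q ^ i) < \<nu> (qf i * Q) + \<nu> (Q ^ i)"
        using ext_strict_r[OF conjunct1[OF conjunct2[OF KL[OF False]]]] nu_fin[OF Qi] by metis
      moreover have "\<nu> (p * h) \<le> \<nu> (p * c i) + \<nu> (Q ^ i)"
      proof (cases "i = 0")
        case True then show ?thesis using c(2) by (simp add: numult kv_one[OF kv] zero_extended_def[symmetric])
      next
        case False
        then have "\<nu> h \<le> \<nu> (c i * Q ^ i)" using c(3) by (simp add: less_imp_le)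
        then have "\<nu> p + \<nu> h \<le> \<nu> p + \<nu> (c i * Q ^ i)" by (rule add_left_mono)
        then show ?thesis by (simp add: numult add.assoc)
      qed
      ultimately show ?thesis by simp
    qed
    have "d j * Q ^ j = rf j * Q ^ j + sh qf j * Q ^ j" by (simp add: d_def algebra_simps)
    then show ?thesis using a b kv_add[OF kv, of "rf j * Q ^ j" "sh qf j * Q ^ j"]
      by (metis less_le_trans min_less_iff_conj)
  qed
  show ?thesis unfolding G_def using ed v0 vj by blast
qed

lemma G_prod: "(\<forall>p\<in>set ps. degree p < n) \<Longrightarrow> prod_list ps \<noteq> 0 \<Longrightarrow> G (prod_list ps)"
proof (induction ps)
  case Nil then show ?case using G_small[of 1] degQ by simp
next
  case (Cons p ps)
  then show ?case using G_step[of "prod_list ps" p] by auto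
qed

end


context kp begin

lemma main:
  assumes f: "f = (\<Sum>i\<le>s. fs i * Q ^ i)"
    and fsG: "\<forall>i\<le>s. fs i = 0 \<or> G (fs i)"
  shows "truncation \<nu> Q f = Min ((\<lambda>i. \<nu> (fs i * Q ^ i)) ` {..s})"
proof -
  define PP where "PP i c N \<longleftrightarrow> (fs i = 0 \<longrightarrow> c = (\<lambda>_. 0)) \<and> isexpN c (fs i) N \<and> \<nu> (c 0) = \<nu> (fs i) \<and>
      (\<forall>j\<ge>1. fs i \<noteq> 0 \<longrightarrow> \<nu> (fs i) < \<nu> (c j * Q ^ j))" for i c N
  have "\<forall>i. \<exists>cN. i \<le> s \<longrightarrow> PP i (fst cN) (snd cN)"
  proof
    fix i show "\<exists>cN. i \<le> s \<longrightarrow> PP i (fst cN) (snd cN)"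
    proof (cases "i \<le> s")
      case True
      show ?thesis
      proof (cases "fs i = 0")
        case z: True
        have "isexpN (\<lambda>_. 0) (fs i) 0" using z degQ by (simp add: isexpN_def)
        then show ?thesis using z by (intro exI[of _ "(\<lambda>_. 0, 0)"]) (simp add: PP_def)
      next
        case nz: False
        then obtain c N where "isexpN c (fs i) N" "\<nu> (c 0) = \<nu> (fs i)" "\<forall>j\<ge>1. \<nu> (fs i) < \<nu> (c j * Q ^ j)"
          using fsG True unfolding G_def by blast
        then show ?thesis using nz by (intro exI[of _ "(c, N)"]) (simp add: PP_def)
      qed
    qed simp
  qed
  from choice[OF this] obtain cN where cN: "\<And>i. i \<le> s \<Longrightarrow> PP i (fst (cN i)) (snd (cN i))" by blast
  define cc where "cc i = fst (cN i)" for i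
  define K where "K = Max ((\<lambda>i. snd (cN i)) ` {..s})"
  have PPi: "PP i (cc i) (snd (cN i))" if "i \<le> s" for i using cN[OF that] by (simp add: cc_def)
  have eK: "isexpN (cc i) (fs i) K" if "i \<le> s" for i
    using PPi[OF that] isexpN_mono[of "cc i" "fs i" "snd (cN i)" K] that unfolding PP_def K_def by simp
  have eKs: "isexpN (shn i (cc i)) (Q ^ i * fs i) (K + s)" if "i \<le> s" for i
    using isexpN_mono[OF isexpN_shn[OF eK[OF that], of i], of "K + s"] that by simp
  define a where "a k = (\<Sum>i\<le>s. shn i (cc i) k)" for k
  have ea: "isexpN a f (K + s)"
  proof -
    have "isexpN (\<lambda>k. \<Sum>i\<le>s. shn i (cc i) k) (\<Sum>i\<le>s. Q ^ i * fs i) (K + s)"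
      by (rule isexpN_sum) (use eKs in auto)
    moreover have "(\<Sum>i\<le>s. Q ^ i * fs i) = f" unfolding f by (simp add: mult.commute)
    ultimately show ?thesis unfolding a_def by simp
  qed
  define mm where "mm = Min ((\<lambda>i. \<nu> (fs i * Q ^ i)) ` {..s})"
  have mm_le: "i \<le> s \<Longrightarrow> mm \<le> \<nu> (fs i * Q ^ i)" for i unfolding mm_def by (intro Min_le) auto
  have ccz: "i \<le> s \<Longrightarrow> fs i = 0 \<Longrightarrow> cc i j = 0" for i j using PPi unfolding PP_def by auto
  have cc_ge: "i \<le> s \<Longrightarrow> \<nu> (fs i) \<le> \<nu> (cc i j * Q ^ j)" for i j
  proof -
    assume i: "i \<le> s"
    show ?thesis
    proof (cases "fs i = 0")
      case True then show ?thesis using ccz[OF i True] by (simp add: nu0)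
    next
      case False
      show ?thesis
      proof (cases "j = 0")
        case True then show ?thesis using PPi[OF i] unfolding PP_def by simp
      next
        case j: False
        then show ?thesis using PPi[OF i] False unfolding PP_def by (simp add: less_imp_le)
      qed
    qed
  qed
  have split: "a k * Q ^ k = (\<Sum>i\<le>s. shn i (cc i) k * Q ^ k)" for k by (simp add: a_def sum_distrib_right)
  have term_eq: "shn i (cc i) k * Q ^ k = (cc i (k - i) * Q ^ (k - i)) * Q ^ i" if "i \<le> k" for i k
  proof -
    have "Q ^ k = Q ^ (k - i) * Q ^ i" using that by (simp add: power_add[symmetric])
    then show ?thesis using that by (simp add: shn_def mult.assoc)
  qed
  have lower: "mm \<le> \<nu> (a k * Q ^ k)" for k
    unfolding split
  proof (rule kv_sum_ge[OF kv])
    fix i assume i: "i \<in> {..s}"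
    show "mm \<le> \<nu> (shn i (cc i) k * Q ^ k)"
    proof (cases "i \<le> k")
      case False then show ?thesis by (simp add: shn_def nu0)
    next
      case True
      have "\<nu> (fs i) + \<nu> (Q ^ i) \<le> \<nu> (cc i (k - i) * Q ^ (k - i)) + \<nu> (Q ^ i)"
        using cc_ge i by (simp add: add_right_mono)
      then show ?thesis using mm_le[of i] i term_eq[OF True] by (simp add: numult)
    qed
  qed
  show ?thesis
  proof (cases "mm = Pinf")
    case True
    then have "\<forall>i\<le>s. fs i * Q ^ i = 0" using mm_le kv_Pinf_iff[OF kv] by (metis Pinf_le)
    then have "f = 0" unfolding f by (intro sum.neutral) (simp del: mult_eq_0_iff)
    then show ?thesis using True unfolding truncation_def mm_def by simp
  next
    case False
    have "mm \<in> (\<lambda>i. \<nu> (fs i * Q ^ i)) ` {..s}" unfolding mm_def by (intro Min_in) auto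
    then obtain i0 where i0: "i0 \<le> s" "\<nu> (fs i0 * Q ^ i0) = mm" by auto
    have fs0: "fs i0 \<noteq> 0" using i0 False by (auto simp: nu0)
    have t0: "\<nu> (shn i0 (cc i0) i0 * Q ^ i0) = mm"
      using PPi[OF i0(1)] i0(2) unfolding PP_def by (simp add: numult shn_def)
    have rest: "mm < \<nu> (\<Sum>i\<in>{..s} - {i0}. shn i (cc i) i0 * Q ^ i0)"
    proof (rule kv_sum_gt[OF kv False])
      fix i assume i: "i \<in> {..s} - {i0}"
      show "mm < \<nu> (shn i (cc i) i0 * Q ^ i0)"
      proof (cases "i \<le> i0")
        case False
        then show ?thesis using \<open>mm \<noteq> Pinf\<close> by (cases mm) (auto simp: shn_def nu0)
      next
        case True
        show ?thesis
        proof (cases "fs i = 0")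
          case z: True
          then show ?thesis using ccz[of i] i \<open>mm \<noteq> Pinf\<close> by (cases mm) (auto simp: shn_def nu0)
        next
          case nz: False
          have Qi: "Q ^ i \<noteq> 0" using Q_nz by simp
          have j: "i0 - i \<ge> 1" using True i by auto
          have "\<nu> (fs i) < \<nu> (cc i (i0 - i) * Q ^ (i0 - i))" using PPi[of i] i nz j unfolding PP_def by auto
          then have "\<nu> (fs i) + \<nu> (Q ^ i) < \<nu> (cc i (i0 - i) * Q ^ (i0 - i)) + \<nu> (Q ^ i)"
            using ext_strict_r nu_fin[OF Qi] by metis
          then show ?thesis using mm_le[of i] i term_eq[OF True] by (simp add: numult)
        qed
      qed
    qed
    have "a i0 * Q ^ i0 = shn i0 (cc i0) i0 * Q ^ i0 + (\<Sum>i\<in>{..s} - {i0}. shn i (cc i) i0 * Q ^ i0)"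
      unfolding split using i0(1) by (simp add: sum.remove)
    then have va: "\<nu> (a i0 * Q ^ i0) = mm" using kv_strict[OF kv, of "shn i0 (cc i0) i0 * Q ^ i0"] t0 rest by simp
    then have ai0: "a i0 \<noteq> 0" using False by (auto simp: nu0)
    have fnz: "f \<noteq> 0"
    proof
      assume "f = 0"
      then have "isexpN (\<lambda>_. 0) f (K + s)" using degQ by (simp add: isexpN_def)
      then have "a = (\<lambda>_. 0)" using qexp_eq ea by metis
      then show False using ai0 by simp
    qed
    have fin: "finite {i. a i \<noteq> 0}"
      using ea unfolding isexpN_def by (metis (mono_tags) finite_atMost finite_subset mem_Collect_eq not_le subsetI atMost_iff)
    have "Min ((\<lambda>i. \<nu> (a i * Q ^ i)) ` {i. a i \<noteq> 0}) = mm"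
    proof (rule Min_eqI)
      show "finite ((\<lambda>i. \<nu> (a i * Q ^ i)) ` {i. a i \<noteq> 0})" using fin by simp
      show "\<And>y. y \<in> (\<lambda>i. \<nu> (a i * Q ^ i)) ` {i. a i \<noteq> 0} \<Longrightarrow> mm \<le> y" using lower by auto
      show "mm \<in> (\<lambda>i. \<nu> (a i * Q ^ i)) ` {i. a i \<noteq> 0}" using va ai0 by force
    qed
    then show ?thesis unfolding truncation_def mm_def using fnz qexp_eq[OF ea] by simp
  qed
qed

end

theorem lemma3p3:
  fixes \<nu> :: "'a::field poly \<Rightarrow> 'g::linordered_ab_group_add extended"
    and Q f :: "'a poly" and fs :: "nat \<Rightarrow> 'a poly" and s :: nat
  assumes "krull_valuation \<nu>"
    and "key_poly \<nu> Q"
    and "degree Q > 0"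
    and "f = (\<Sum>i\<le>s. fs i * Q ^ i)"
    and "\<forall>i\<le>s. fs i = 0 \<or>
           (\<exists>ps :: 'a poly list. (\<forall>p\<in>set ps. degree p < degree Q) \<and> fs i = prod_list ps)"
  shows "truncation \<nu> Q f = Min ((\<lambda>i. \<nu> (fs i * Q ^ i)) ` {..s})"
proof -
  interpret kp \<nu> Q using assms(1-3) by unfold_locales
  show ?thesis
  proof (rule main[OF assms(4)])
    show "\<forall>i\<le>s. fs i = 0 \<or> G (fs i)"
    proof (intro allI impI)
      fix i assume "i \<le> s"
      then consider "fs i = 0" | ps where "\<forall>p\<in>set ps. degree p < degree Q" "fs i = prod_list ps"
        using assms(5) by blast
      then show "fs i = 0 \<or> G (fs i)"
      proof cases
        case 2 then show ?thesis using G_prod[of ps] by (cases "prod_list ps = 0") auto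
      qed simp
    qed
  qed
qed


end
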